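(* Let $r$ be a positive integer, let $G_r=(V,E)$ be the Chimera graph with $E=E_0\cup E_1\cup E_{01}$, and let $c_{uv}\in\mathbb{R}$ for $(u,v)\in E$ and $d_u\in\mathbb{R}$ for $u\in V$ be arbitrary. Let $H^*=\min_{S\in\{-1,1\}^V}\left(\sum_{(u,v)\in E}c_{uv}S_uS_v+\sum_{u\in V}d_uS_u\right)$, and let $A_0=\sum_{(u,v)\in E_0}|c_{uv}|$ and $A_1=\sum_{(u,v)\in E_1}|c_{uv}|$. Then $H^*\le -(A_0+A_1)$.
   Context: The Chimera graph $G_r=(V,E)$: $V=\{(i,j,k,l)\in\mathbb{Z}^4: 1\le i,j\le r,\ 1\le k\le 4,\ l\in\{0,1\}\}$. $E=E_0\cup E_1\cup E_{01}$ (disjoint), where $E_0$ consists of the edges $\{(i,j,k,0),(i+1,j,k,0)\}$ for $1\le i\le r-1$, $1\le j\le r$, $1\le k\le 4$; $E_1$ consists of the edges $\{(i,j,k,1),(i,j+1,k,1)\}$ for $1\le i\le r$, $1\le j\le r-1$, $1\le k\le 4$; and $E_{01}$ consists of the edges $\{(i,j,k_0,0),(i,j,k_1,1)\}$ for $1\le i,j\le r$, $1\le k_0,k_1\le 4$. *)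

theory Defs
  imports Complex_Main "HOL-Library.FuncSet"
begin

type_synonym cvertex = "int \<times> int \<times> int \<times> int"

definition chimera_V :: "int \<Rightarrow> cvertex set" where
  "chimera_V r = {(i,j,k,l). 1 \<le> i \<and> i \<le> r \<and> 1 \<le> j \<and> j \<le> r \<and> 1 \<le> k \<and> k \<le> 4 \<and> l \<in> {0,1}}"

definition chimera_E0 :: "int \<Rightarrow> (cvertex \<times> cvertex) set" where
  "chimera_E0 r = {((i,j,k,0),(i+1,j,k,0)) | i j k.
      1 \<le> i \<and> i \<le> r - 1 \<and> 1 \<le> j \<and> j \<le> r \<and> 1 \<le> k \<and> k \<le> 4}"

definition chimera_E1 :: "int \<Rightarrow> (cvertex \<times> cvertex) set" where
  "chimera_E1 r = {((i,j,k,1),(i,j+1,k,1)) | i j k.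
      1 \<le> i \<and> i \<le> r \<and> 1 \<le> j \<and> j \<le> r - 1 \<and> 1 \<le> k \<and> k \<le> 4}"

definition chimera_E01 :: "int \<Rightarrow> (cvertex \<times> cvertex) set" where
  "chimera_E01 r = {((i,j,k0,0),(i,j,k1,1)) | i j k0 k1.
      1 \<le> i \<and> i \<le> r \<and> 1 \<le> j \<and> j \<le> r \<and> 1 \<le> k0 \<and> k0 \<le> 4 \<and> 1 \<le> k1 \<and> k1 \<le> 4}"

definition chimera_E :: "int \<Rightarrow> (cvertex \<times> cvertex) set" where
  "chimera_E r = chimera_E0 r \<union> chimera_E1 r \<union> chimera_E01 r"

definition ising_energy :: "int \<Rightarrow> (cvertex \<Rightarrow> cvertex \<Rightarrow> real) \<Rightarrow> (cvertex \<Rightarrow> real)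
    \<Rightarrow> (cvertex \<Rightarrow> real) \<Rightarrow> real" where
  "ising_energy r c d S =
     (\<Sum>(u,v)\<in>chimera_E r. c u v * S u * S v) + (\<Sum>u\<in>chimera_V r. d u * S u)"

definition ground_energy :: "int \<Rightarrow> (cvertex \<Rightarrow> cvertex \<Rightarrow> real) \<Rightarrow> (cvertex \<Rightarrow> real) \<Rightarrow> real" where
  "ground_energy r c d = Min (ising_energy r c d ` (chimera_V r \<rightarrow>\<^sub>E {-1, 1}))"

end

theory Submission
  imports Defs
begin

fun ch :: "(int \<Rightarrow> real) \<Rightarrow> nat \<Rightarrow> real" where
  "ch g 0 = 1"
| "ch g (Suc n) = g (int n + 1) * ch g n"

lemma ch_pm: "(\<And>i. g i \<in> {-1,1}) \<Longrightarrow> ch g n \<in> {-1,1}"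
proof (induction n)
  case (Suc n)
  have g: "g (int n + 1) = -1 \<or> g (int n + 1) = 1" using Suc.prems[of "int n + 1"] by simp
  have h: "ch g n = -1 \<or> ch g n = 1" using Suc by simp
  from g h show ?case by (elim disjE) simp_all
qed simp

lemma ch_sq: "(\<And>i. g i \<in> {-1,1}) \<Longrightarrow> ch g n * ch g n = 1"
  using ch_pm[of g n] by auto

lemma ch_step: "i \<ge> 1 \<Longrightarrow> ch g (nat i) = g i * ch g (nat (i - 1))"
proof -
  assume "i \<ge> 1"
  then have "nat i = Suc (nat (i-1))" by simp
  moreover have "int (nat (i-1)) + 1 = i" using \<open>i \<ge> 1\<close> by simp
  ultimately show ?thesis by simp
qed

definition sg :: "real \<Rightarrow> real" where "sg x = (if x \<ge> 0 then -1 else 1)"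

lemma sg_pm: "sg x \<in> {-1,1}" by (simp add: sg_def)
lemma sg_mul: "x * sg x = - \<bar>x\<bar>" by (simp add: sg_def)

lemma V_eq: "chimera_V r = {1..r} \<times> {1..r} \<times> {1..4} \<times> {0,1}"
  by (auto simp: chimera_V_def)

lemma V_fin: "finite (chimera_V r)" by (simp add: V_eq)

lemma E0_sub: "chimera_E0 r \<subseteq> chimera_V r \<times> chimera_V r"
  by (auto simp: chimera_E0_def chimera_V_def)
lemma E1_sub: "chimera_E1 r \<subseteq> chimera_V r \<times> chimera_V r"
  by (auto simp: chimera_E1_def chimera_V_def)
lemma E01_sub: "chimera_E01 r \<subseteq> chimera_V r \<times> chimera_V r"
  by (auto simp: chimera_E01_def chimera_V_def)

lemma E0_fin: "finite (chimera_E0 r)"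
  using E0_sub V_fin finite_subset by blast
lemma E1_fin: "finite (chimera_E1 r)"
  using E1_sub V_fin finite_subset by blast
lemma E01_fin: "finite (chimera_E01 r)"
  using E01_sub V_fin finite_subset by blast

lemma E_split: "(\<Sum>(u,v)\<in>chimera_E r. F u v) =
   (\<Sum>(u,v)\<in>chimera_E0 r. F u v) + (\<Sum>(u,v)\<in>chimera_E1 r. F u v) + (\<Sum>(u,v)\<in>chimera_E01 r. F u v)"
proof -
  have d1: "chimera_E0 r \<inter> chimera_E1 r = {}"
    by (auto simp: chimera_E0_def chimera_E1_def)
  have d2: "(chimera_E0 r \<union> chimera_E1 r) \<inter> chimera_E01 r = {}"
    by (auto simp: chimera_E0_def chimera_E1_def chimera_E01_def)
  show ?thesis unfolding chimera_E_def
    using E0_fin E1_fin E01_fin d1 d2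
    by (simp add: sum.union_disjoint)
qed

definition S0 :: "(cvertex \<Rightarrow> cvertex \<Rightarrow> real) \<Rightarrow> cvertex \<Rightarrow> real" where
  "S0 c v = (case v of (i,j,k,l) \<Rightarrow>
     if l = 0 then ch (\<lambda>i'. sg (c (i',j,k,0) (i'+1,j,k,0))) (nat (i-1))
     else ch (\<lambda>j'. sg (c (i,j',k,1) (i,j'+1,k,1))) (nat (j-1)))"

lemma S0_pm: "S0 c v \<in> {-1,1}"
proof -
  obtain i j k l where v: "v = (i,j,k,l)" by (cases v) auto
  show ?thesis unfolding S0_def v using ch_pm[OF sg_pm] by simp
qed

definition lw :: "real \<Rightarrow> real \<Rightarrow> cvertex \<Rightarrow> real" where
  "lw a b v = (if snd (snd (snd v)) = 0 then a else b)"

definition SS :: "int \<Rightarrow> (cvertex \<Rightarrow> cvertex \<Rightarrow> real) \<Rightarrow> real \<Rightarrow> real \<Rightarrow> cvertex \<Rightarrow> real" where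
  "SS r c a b v = (if v \<in> chimera_V r then lw a b v * S0 c v else undefined)"

lemma SS_in: "a \<in> {-1,1} \<Longrightarrow> b \<in> {-1,1} \<Longrightarrow> SS r c a b \<in> chimera_V r \<rightarrow>\<^sub>E {-1,1}"
proof -
  assume a: "a \<in> {-1,1}" and b: "b \<in> {-1,1}"
  have "lw a b v * S0 c v \<in> {-1,1}" for v
  proof -
    have l: "lw a b v = -1 \<or> lw a b v = 1" using a b by (auto simp: lw_def)
    have s: "S0 c v = -1 \<or> S0 c v = 1" using S0_pm[of c v] by simp
    from l s show ?thesis by (elim disjE) simp_all
  qed
  then show ?thesis by (auto simp: SS_def PiE_def extensional_def)
qed

lemma E0_val:
  assumes "a \<in> {-1,1}" "b \<in> {-1,1}" "(u,v) \<in> chimera_E0 r"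
  shows "c u v * SS r c a b u * SS r c a b v = - \<bar>c u v\<bar>"
proof -
  from assms(3) obtain i j k where uv: "u = (i,j,k,0)" "v = (i+1,j,k,0)"
    and b: "1 \<le> i" "i \<le> r - 1" "1 \<le> j" "j \<le> r" "1 \<le> k" "k \<le> 4"
    by (auto simp: chimera_E0_def)
  have inV: "u \<in> chimera_V r" "v \<in> chimera_V r" using uv b by (auto simp: chimera_V_def)
  define g where "g = (\<lambda>i'. sg (c (i',j,k,0) (i'+1,j,k,0)))"
  have gpm: "\<And>i. g i \<in> {-1,1}" by (simp add: g_def sg_def)
  have su: "S0 c u = ch g (nat (i-1))" by (simp add: S0_def uv g_def)
  have sv: "S0 c v = g i * ch g (nat (i-1))"
    using ch_step[of i g] b by (simp add: S0_def uv g_def)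
  have aa: "a * a = 1" using assms(1) by auto
  have "c u v * SS r c a b u * SS r c a b v = (a*a) * (c u v * g i) * (ch g (nat (i-1)) * ch g (nat (i-1)))"
    using inV su sv uv by (simp add: SS_def lw_def algebra_simps)
  also have "\<dots> = c u v * g i" using aa ch_sq[OF gpm] by simp
  also have "\<dots> = - \<bar>c u v\<bar>" by (simp add: g_def uv sg_mul)
  finally show ?thesis .
qed

lemma E1_val:
  assumes "a \<in> {-1,1}" "b \<in> {-1,1}" "(u,v) \<in> chimera_E1 r"
  shows "c u v * SS r c a b u * SS r c a b v = - \<bar>c u v\<bar>"
proof -
  from assms(3) obtain i j k where uv: "u = (i,j,k,1)" "v = (i,j+1,k,1)"
    and b: "1 \<le> i" "i \<le> r" "1 \<le> j" "j \<le> r - 1" "1 \<le> k" "k \<le> 4"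
    by (auto simp: chimera_E1_def)
  have inV: "u \<in> chimera_V r" "v \<in> chimera_V r" using uv b by (auto simp: chimera_V_def)
  define g where "g = (\<lambda>j'. sg (c (i,j',k,1) (i,j'+1,k,1)))"
  have gpm: "\<And>i. g i \<in> {-1,1}" by (simp add: g_def sg_def)
  have su: "S0 c u = ch g (nat (j-1))" by (simp add: S0_def uv g_def)
  have sv: "S0 c v = g j * ch g (nat (j-1))"
    using ch_step[of j g] b by (simp add: S0_def uv g_def)
  have bb: "b * b = 1" using assms(2) by auto
  have "c u v * SS r c a b u * SS r c a b v = (b*b) * (c u v * g j) * (ch g (nat (j-1)) * ch g (nat (j-1)))"
    using inV su sv uv by (simp add: SS_def lw_def algebra_simps)
  also have "\<dots> = c u v * g j" using bb ch_sq[OF gpm] by simp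
  also have "\<dots> = - \<bar>c u v\<bar>" by (simp add: g_def uv sg_mul)
  finally show ?thesis .
qed

lemma E01_val:
  assumes "(u,v) \<in> chimera_E01 r"
  shows "c u v * SS r c a b u * SS r c a b v = a * b * (c u v * S0 c u * S0 c v)"
proof -
  from assms obtain i j k0 k1 where uv: "u = (i,j,k0,0)" "v = (i,j,k1,1)"
    and bd: "1 \<le> i" "i \<le> r" "1 \<le> j" "j \<le> r" "1 \<le> k0" "k0 \<le> 4" "1 \<le> k1" "k1 \<le> 4"
    by (auto simp: chimera_E01_def)
  have inV: "u \<in> chimera_V r" "v \<in> chimera_V r" using uv bd by (auto simp: chimera_V_def)
  show ?thesis using inV uv by (simp add: SS_def lw_def algebra_simps)
qed

definition A where "A r c = (\<Sum>(u,v)\<in>chimera_E0 r. \<bar>c u v\<bar>) + (\<Sum>(u,v)\<in>chimera_E1 r. \<bar>c u v\<bar>)"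
definition G where "G r c = (\<Sum>(u,v)\<in>chimera_E01 r. c u v * S0 c u * S0 c v)"

lemma energy_SS:
  assumes "a \<in> {-1,1}" "b \<in> {-1,1}"
  shows "ising_energy r c d (SS r c a b) = - A r c + a * b * G r c
     + (\<Sum>u\<in>chimera_V r. lw a b u * (d u * S0 c u))"
proof -
  have e0: "(\<Sum>(u,v)\<in>chimera_E0 r. c u v * SS r c a b u * SS r c a b v) = (\<Sum>(u,v)\<in>chimera_E0 r. - \<bar>c u v\<bar>)"
    by (rule sum.cong) (auto intro: E0_val[OF assms])
  have e1: "(\<Sum>(u,v)\<in>chimera_E1 r. c u v * SS r c a b u * SS r c a b v) = (\<Sum>(u,v)\<in>chimera_E1 r. - \<bar>c u v\<bar>)"
    by (rule sum.cong) (auto intro: E1_val[OF assms])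
  have e01: "(\<Sum>(u,v)\<in>chimera_E01 r. c u v * SS r c a b u * SS r c a b v) = (\<Sum>(u,v)\<in>chimera_E01 r. a * b * (c u v * S0 c u * S0 c v))"
    by (rule sum.cong) (auto intro: E01_val)
  have dv: "(\<Sum>u\<in>chimera_V r. d u * SS r c a b u) = (\<Sum>u\<in>chimera_V r. lw a b u * (d u * S0 c u))"
    by (rule sum.cong) (auto simp: SS_def)
  have n0: "(\<Sum>(u,v)\<in>chimera_E0 r. - \<bar>c u v\<bar>) = - (\<Sum>(u,v)\<in>chimera_E0 r. \<bar>c u v\<bar>)"
    by (simp add: case_prod_unfold sum_negf)
  have n1: "(\<Sum>(u,v)\<in>chimera_E1 r. - \<bar>c u v\<bar>) = - (\<Sum>(u,v)\<in>chimera_E1 r. \<bar>c u v\<bar>)"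
    by (simp add: case_prod_unfold sum_negf)
  have n01: "(\<Sum>(u,v)\<in>chimera_E01 r. a * b * (c u v * S0 c u * S0 c v)) = a * b * G r c"
    by (simp add: G_def case_prod_unfold sum_distrib_left)
  show ?thesis
    unfolding ising_energy_def E_split[of "\<lambda>u v. c u v * SS r c a b u * SS r c a b v"]
    using e0 e1 e01 dv n0 n1 n01 by (simp add: A_def)
qed

theorem lemma1:
  fixes r :: int and c :: "cvertex \<Rightarrow> cvertex \<Rightarrow> real" and d :: "cvertex \<Rightarrow> real"
  assumes "r \<ge> 1"
  shows "ground_energy r c d \<le>
    - ((\<Sum>(u,v)\<in>chimera_E0 r. \<bar>c u v\<bar>) + (\<Sum>(u,v)\<in>chimera_E1 r. \<bar>c u v\<bar>))"
proof -
  let ?X = "ising_energy r c d ` (chimera_V r \<rightarrow>\<^sub>E {-1, 1})"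
  have fin: "finite ?X" using V_fin by (simp add: finite_PiE)
  let ?e = "\<lambda>a b. ising_energy r c d (SS r c a b)"
  have m: "ground_energy r c d \<le> ?e a b" if "a \<in> {-1,1}" "b \<in> {-1,1}" for a b
    unfolding ground_energy_def using fin SS_in[OF that] by (intro Min_le) auto
  let ?D = "\<lambda>a b. (\<Sum>u\<in>chimera_V r. lw a b u * (d u * S0 c u))"
  have Dz: "?D 1 1 + ?D 1 (-1) + ?D (-1) 1 + ?D (-1) (-1) = 0"
  proof -
    have "?D 1 1 + ?D 1 (-1) + ?D (-1) 1 + ?D (-1) (-1) =
      (\<Sum>u\<in>chimera_V r. (lw 1 1 u + lw 1 (-1) u + lw (-1) 1 u + lw (-1) (-1) u) * (d u * S0 c u))"
      by (simp add: sum.distrib[symmetric] algebra_simps)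
    also have "\<dots> = 0" by (rule sum.neutral) (simp add: lw_def)
    finally show ?thesis .
  qed
  have "4 * ground_energy r c d \<le> ?e 1 1 + ?e 1 (-1) + ?e (-1) 1 + ?e (-1) (-1)"
    using m[of 1 1] m[of 1 "-1"] m[of "-1" 1] m[of "-1" "-1"] by simp
  also have "\<dots> = - 4 * A r c"
    using Dz by (simp add: energy_SS)
  finally show ?thesis by (simp add: A_def)
qed

end
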